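(* Let $\mathcal{T}$ be a triangulation of a marked surface $(S,V)$. Then $D_f(\mathcal{T})\subset Q_f(\mathcal{T})$; that is, if $(\mathbf{I},\mathbf{r})\in\mathbb{R}^{E(\mathcal{T})}_{>1}\times\mathbb{R}^V_{>0}$ satisfies the local weighted Delaunay inequality on every edge of $\mathcal{T}$, then the lengths $L_f(\mathbf{I},\mathbf{r})$ satisfy the triangle inequalities on every face of $\mathcal{T}$ (so they define a piecewise flat metric).
   Context: A marked surface $(S,V)$: closed oriented surface $S$, nonempty finite $V=\{v_1,\dots,v_n\}$, $\chi(S\setminus V)<0$; a triangulation $\mathcal{T}$ is a $\Delta$-complex decomposition with $0$-cells $V$ (up to isotopy fixing $V$), with edges $E(\mathcal{T})$. For $(\mathbf{I},\mathbf{r})\in\mathbb{R}^{E(\mathcal{T})}_{>1}\times\mathbb{R}^V_{>0}$, $L_f(\mathbf{I},\mathbf{r})(e_{ij})=\sqrt{r_i^2+r_j^2+2I_{ij}r_ir_j}$. $Q_f(\mathcal{T})$ is the set of $(\mathbf{I},\mathbf{r})$ for which $L_f(\mathbf{I},\mathbf{r})$ satisfies the strict triangle inequality on every face. Local weighted Delaunay inequality at an edge $e_{ij}$ with adjacent faces $f_{ijk},f_{ijl}$ (hinge $\Diamond_{ij;kl}$): with $p=r_k,q=r_i,r=r_l,s=r_j$, $a=I_{ki},b=I_{il},c=I_{lj},d=I_{jk},e=I_{ij}$, $\Delta_{xyz}=x^2+y^2+z^2+2xyz-1$, $f=\frac{ab+cd+ace+bde+\sqrt{\Delta_{ade}}\sqrt{\Delta_{bce}}}{e^2-1}$,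 it is the inequality $\frac{\sqrt{\Delta_{bce}}}{p}+\frac{\sqrt{\Delta_{ade}}}{r}\le\frac{\sqrt{\Delta_{cdf}}}{q}+\frac{\sqrt{\Delta_{abf}}}{s}$. $D_f(\mathcal{T})$ is the set of $(\mathbf{I},\mathbf{r})\in\mathbb{R}^{E(\mathcal{T})}_{>1}\times\mathbb{R}^V_{>0}$ satisfying it at every edge. *)

theory Defs
  imports Complex_Main
begin

text \<open>
Combinatorial model of a triangulation (Delta-complex) of a closed oriented surface
with vertex set V.  The triangulation is given by a finite set D of darts (oriented
sides of triangles), a permutation nxt of order 3 (next side in the same oriented face),
a fixed-point-free involution opp (the edge gluing, orientation reversing) and a
tail map assigning to each dart its initial vertex.  Faces are nxt-orbits, edges are
opp-orbits, vertices are the values of tail; two darts have the same tail exactly when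
they lie in the same orbit of the rotation around a vertex, d |-> nxt (opp d), so that
the quotient space is a closed surface.
\<close>

definition edge_of :: "('d \<Rightarrow> 'd) \<Rightarrow> 'd \<Rightarrow> 'd set" where
  "edge_of opp d = {d, opp d}"

definition face_of :: "('d \<Rightarrow> 'd) \<Rightarrow> 'd \<Rightarrow> 'd set" where
  "face_of nxt d = {d, nxt d, nxt (nxt d)}"

definition tri_edges :: "'d set \<Rightarrow> ('d \<Rightarrow> 'd) \<Rightarrow> 'd set set" where
  "tri_edges D opp = edge_of opp ` D"

definition tri_faces :: "'d set \<Rightarrow> ('d \<Rightarrow> 'd) \<Rightarrow> 'd set set" where
  "tri_faces D nxt = face_of nxt ` D"

definition triangulation ::
  "'d set \<Rightarrow> ('d \<Rightarrow> 'd) \<Rightarrow> ('d \<Rightarrow> 'd) \<Rightarrow> ('d \<Rightarrow> 'v) \<Rightarrow> 'v set \<Rightarrow> bool" where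
  "triangulation D nxt opp tail V \<longleftrightarrow>
     finite D \<and> D \<noteq> {} \<and>
     (\<forall>d\<in>D. nxt d \<in> D \<and> nxt d \<noteq> d \<and> nxt (nxt (nxt d)) = d) \<and>
     (\<forall>d\<in>D. opp d \<in> D \<and> opp d \<noteq> d \<and> opp (opp d) = d) \<and>
     (\<forall>d\<in>D. tail (opp d) = tail (nxt d)) \<and>
     (\<forall>d\<in>D. \<forall>d'\<in>D. tail d = tail d' \<longleftrightarrow> (\<exists>n. ((\<lambda>x. nxt (opp x)) ^^ n) d = d')) \<and>
     (\<forall>d\<in>D. \<forall>d'\<in>D. (d, d') \<in> {(x, y). x \<in> D \<and> (y = nxt x \<or> y = opp x)}\<^sup>*) \<and>
     V = tail ` D \<and>
     \<comment> \<open>chi(S minus V) = |F| - |E| < 0\<close>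
     card (tri_faces D nxt) < card (tri_edges D opp)"

definition Lf :: "('d \<Rightarrow> 'd) \<Rightarrow> ('d \<Rightarrow> 'd) \<Rightarrow> ('d \<Rightarrow> 'v)
     \<Rightarrow> ('d set \<Rightarrow> real) \<Rightarrow> ('v \<Rightarrow> real) \<Rightarrow> 'd \<Rightarrow> real" where
  "Lf nxt opp tail I r d =
     sqrt ((r (tail d))\<^sup>2 + (r (tail (nxt d)))\<^sup>2
           + 2 * I (edge_of opp d) * r (tail d) * r (tail (nxt d)))"

definition params :: "'d set \<Rightarrow> ('d \<Rightarrow> 'd) \<Rightarrow> 'v set
     \<Rightarrow> (('d set \<Rightarrow> real) \<times> ('v \<Rightarrow> real)) set" where
  "params D opp V = {(I, r). (\<forall>e\<in>tri_edges D opp. I e > 1) \<and> (\<forall>v\<in>V. r v > 0)}"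

text \<open>Q_f(T): strict triangle inequalities on every face (all three rotations of each
face are covered by quantifying over all darts).\<close>
definition Qf :: "'d set \<Rightarrow> ('d \<Rightarrow> 'd) \<Rightarrow> ('d \<Rightarrow> 'd) \<Rightarrow> ('d \<Rightarrow> 'v) \<Rightarrow> 'v set
     \<Rightarrow> (('d set \<Rightarrow> real) \<times> ('v \<Rightarrow> real)) set" where
  "Qf D nxt opp tail V = {(I, r). (I, r) \<in> params D opp V \<and>
     (\<forall>d\<in>D. Lf nxt opp tail I r d
              < Lf nxt opp tail I r (nxt d) + Lf nxt opp tail I r (nxt (nxt d)))}"

definition Dlt :: "real \<Rightarrow> real \<Rightarrow> real \<Rightarrow> real" where
  "Dlt x y z = x\<^sup>2 + y\<^sup>2 + z\<^sup>2 + 2 * x * y * z - 1"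

definition fpar :: "real \<Rightarrow> real \<Rightarrow> real \<Rightarrow> real \<Rightarrow> real \<Rightarrow> real" where
  "fpar a b c d e =
     (a * b + c * d + a * c * e + b * d * e + sqrt (Dlt a d e) * sqrt (Dlt b c e)) / (e\<^sup>2 - 1)"

definition local_wDelaunay :: "real \<Rightarrow> real \<Rightarrow> real \<Rightarrow> real
     \<Rightarrow> real \<Rightarrow> real \<Rightarrow> real \<Rightarrow> real \<Rightarrow> real \<Rightarrow> bool" where
  "local_wDelaunay p q r s a b c d e \<longleftrightarrow>
     (let f = fpar a b c d e in
       sqrt (Dlt b c e) / p + sqrt (Dlt a d e) / r
         \<le> sqrt (Dlt c d f) / q + sqrt (Dlt a b f) / s)"

text \<open>Local weighted Delaunay condition at the edge of dart d.  d runs from i to j in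
face f_ijk; opp d runs from j to i in the adjacent face f_jil.\<close>
definition delaunay_at :: "('d \<Rightarrow> 'd) \<Rightarrow> ('d \<Rightarrow> 'd) \<Rightarrow> ('d \<Rightarrow> 'v)
     \<Rightarrow> ('d set \<Rightarrow> real) \<Rightarrow> ('v \<Rightarrow> real) \<Rightarrow> 'd \<Rightarrow> bool" where
  "delaunay_at nxt opp tail I r d \<longleftrightarrow>
     (let i = tail d; j = tail (nxt d); k = tail (nxt (nxt d));
          l = tail (nxt (nxt (opp d)));
          E = edge_of opp
      in local_wDelaunay (r k) (r i) (r l) (r j)
           (I (E (nxt (nxt d)))) (I (E (nxt (opp d))))
           (I (E (nxt (nxt (opp d))))) (I (E (nxt d))) (I (E d)))"

definition Df :: "'d set \<Rightarrow> ('d \<Rightarrow> 'd) \<Rightarrow> ('d \<Rightarrow> 'd) \<Rightarrow> ('d \<Rightarrow> 'v) \<Rightarrow> 'v set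
     \<Rightarrow> (('d set \<Rightarrow> real) \<times> ('v \<Rightarrow> real)) set" where
  "Df D nxt opp tail V = {(I, r). (I, r) \<in> params D opp V \<and>
     (\<forall>d\<in>D. delaunay_at nxt opp tail I r d)}"

end

theory Submission
  imports Defs
begin

definition len :: "real \<Rightarrow> real \<Rightarrow> real \<Rightarrow> real" where
  "len x y I = sqrt (x\<^sup>2 + y\<^sup>2 + 2 * I * x * y)"

definition Ytri :: "real \<Rightarrow> real \<Rightarrow> real \<Rightarrow> real \<Rightarrow> real \<Rightarrow> real \<Rightarrow> real" where
  "Ytri e A Dd x y z = (e\<^sup>2 - 1) * x * y - (A + Dd * e) * y * z - (Dd + A * e) * x * z"

lemma len_sym: "len x y I = len y x I"
  unfolding len_def by (simp add: algebra_simps)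

lemma len_sq: "x \<ge> 0 \<Longrightarrow> y \<ge> 0 \<Longrightarrow> I \<ge> 0 \<Longrightarrow> (len x y I)\<^sup>2 = x\<^sup>2 + y\<^sup>2 + 2 * I * x * y"
  unfolding len_def by (simp add: zero_le_mult_iff)

lemma len_pos: "x > 0 \<Longrightarrow> y > 0 \<Longrightarrow> I \<ge> 0 \<Longrightarrow> len x y I > 0"
  unfolding len_def by (simp add: add_pos_nonneg)

lemma len_mono2: "x \<ge> 0 \<Longrightarrow> 0 \<le> z' \<Longrightarrow> z' \<le> z \<Longrightarrow> I \<ge> 0 \<Longrightarrow> len x z' I \<le> len x z I"
  unfolding len_def
  by (intro real_sqrt_le_mono add_mono power_mono mult_left_mono mult_right_mono) auto

lemma Dlt_pos: "a > 1 \<Longrightarrow> d > 1 \<Longrightarrow> e > 1 \<Longrightarrow> Dlt a d e > 0"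
proof -
  assume h: "a > 1" "d > 1" "e > 1"
  have "a\<^sup>2 > 1" using h by (simp add: one_less_power)
  moreover have "a * d * e > 0" using h by simp
  moreover have "0 \<le> d\<^sup>2" "0 \<le> e\<^sup>2" by simp_all
  ultimately show ?thesis unfolding Dlt_def by linarith
qed

lemma heron_id:
  fixes x y z e A Dd :: real
  shows "4 * ((Ytri e A Dd x y z)\<^sup>2 - Dlt A Dd e * (x\<^sup>2 + y\<^sup>2 + 2 * e * x * y) * z\<^sup>2)
     = - (e\<^sup>2 - 1) * (2 * ((x\<^sup>2 + y\<^sup>2 + 2 * e * x * y) * (y\<^sup>2 + z\<^sup>2 + 2 * Dd * y * z)
        + (y\<^sup>2 + z\<^sup>2 + 2 * Dd * y * z) * (z\<^sup>2 + x\<^sup>2 + 2 * A * z * x)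
        + (z\<^sup>2 + x\<^sup>2 + 2 * A * z * x) * (x\<^sup>2 + y\<^sup>2 + 2 * e * x * y))
        - (x\<^sup>2 + y\<^sup>2 + 2 * e * x * y)\<^sup>2 - (y\<^sup>2 + z\<^sup>2 + 2 * Dd * y * z)\<^sup>2
        - (z\<^sup>2 + x\<^sup>2 + 2 * A * z * x)\<^sup>2)"
  unfolding Ytri_def Dlt_def
  by (simp add: power2_eq_square algebra_simps)

lemma heron_fact:
  fixes l1 l2 l3 :: real
  shows "2 * (l1\<^sup>2 * l2\<^sup>2 + l2\<^sup>2 * l3\<^sup>2 + l3\<^sup>2 * l1\<^sup>2) - (l1\<^sup>2)\<^sup>2 - (l2\<^sup>2)\<^sup>2 - (l3\<^sup>2)\<^sup>2
     = ((l2 + l3)\<^sup>2 - l1\<^sup>2) * (l1\<^sup>2 - (l2 - l3)\<^sup>2)"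
  by (simp add: power2_eq_square algebra_simps)

lemma Y_heron:
  fixes x y z e A Dd :: real
  assumes "x > 0" "y > 0" "z > 0" "e > 1" "A > 1" "Dd > 1"
  shows "4 * ((Ytri e A Dd x y z)\<^sup>2 - (sqrt (Dlt A Dd e) * len x y e * z)\<^sup>2)
    = - (e\<^sup>2 - 1) * (((len y z Dd + len z x A)\<^sup>2 - (len x y e)\<^sup>2)
           * ((len x y e)\<^sup>2 - (len y z Dd - len z x A)\<^sup>2))"
proof -
  have s1: "(len x y e)\<^sup>2 = x\<^sup>2 + y\<^sup>2 + 2 * e * x * y" using assms by (intro len_sq) auto
  have s2: "(len y z Dd)\<^sup>2 = y\<^sup>2 + z\<^sup>2 + 2 * Dd * y * z" using assms by (intro len_sq) auto
  have s3: "(len z x A)\<^sup>2 = z\<^sup>2 + x\<^sup>2 + 2 * A * z * x" using assms by (intro len_sq) auto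
  have sD: "(sqrt (Dlt A Dd e))\<^sup>2 = Dlt A Dd e" using Dlt_pos[of A Dd e] assms by simp
  have "(sqrt (Dlt A Dd e) * len x y e * z)\<^sup>2 = Dlt A Dd e * (x\<^sup>2 + y\<^sup>2 + 2 * e * x * y) * z\<^sup>2"
    by (simp add: power_mult_distrib sD s1)
  then have "4 * ((Ytri e A Dd x y z)\<^sup>2 - (sqrt (Dlt A Dd e) * len x y e * z)\<^sup>2)
     = - (e\<^sup>2 - 1) * (2 * ((len x y e)\<^sup>2 * (len y z Dd)\<^sup>2 + (len y z Dd)\<^sup>2 * (len z x A)\<^sup>2
          + (len z x A)\<^sup>2 * (len x y e)\<^sup>2) - ((len x y e)\<^sup>2)\<^sup>2 - ((len y z Dd)\<^sup>2)\<^sup>2 - ((len z x A)\<^sup>2)\<^sup>2)"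
    using heron_id[of e A Dd x y z] unfolding s1 s2 s3 by simp
  then show ?thesis by (simp only: heron_fact)
qed

lemma Y_sign:
  fixes x y z e A Dd :: real
  assumes pos: "x > 0" "y > 0" "z > 0" "e > 1" "A > 1" "Dd > 1"
    and deg: "len x y e \<ge> len y z Dd + len z x A"
  shows "Ytri e A Dd x y z \<ge> 0"
proof (rule ccontr)
  assume "\<not> ?thesis"
  then have neg: "Ytri e A Dd x y z < 0" by simp
  define K where "K = (A + Dd * e) * y + (Dd + A * e) * x"
  have Kpos: "K > 0" unfolding K_def using pos by (simp add: add_pos_pos)
  define z0 where "z0 = (e\<^sup>2 - 1) * x * y / K"
  have e2: "e\<^sup>2 - 1 > 0" using pos by (simp add: one_less_power)
  have z0pos: "z0 > 0" unfolding z0_def using e2 pos Kpos by simp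
  have Yz: "Ytri e A Dd x y z = (e\<^sup>2 - 1) * x * y - K * z"
    unfolding Ytri_def K_def by (simp add: algebra_simps)
  have Yz0: "Ytri e A Dd x y z0 = 0"
    unfolding Ytri_def using Kpos unfolding z0_def K_def by (simp add: field_simps)
  have "K * z0 = (e\<^sup>2 - 1) * x * y" unfolding z0_def using Kpos by simp
  then have "z0 < z" using neg Yz Kpos by (smt (verit) mult_less_cancel_left)
  have m1: "len y z0 Dd \<le> len y z Dd" using pos z0pos \<open>z0 < z\<close> by (intro len_mono2) auto
  have m2: "len z0 x A \<le> len z x A" using pos z0pos \<open>z0 < z\<close> len_mono2[of x z0 z A] len_sym
    by (metis less_eq_real_def order_less_trans zero_less_one)
  have deg0: "len x y e \<ge> len y z0 Dd + len z0 x A" using deg m1 m2 by simp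
  have l0: "len y z0 Dd \<ge> 0" "len z0 x A \<ge> 0" using len_pos pos z0pos
    by (smt (verit))+
  have h1: "(len y z0 Dd + len z0 x A)\<^sup>2 - (len x y e)\<^sup>2 \<le> 0"
    using deg0 l0 by (smt (verit) power_mono)
  have h2: "(len x y e)\<^sup>2 - (len y z0 Dd - len z0 x A)\<^sup>2 \<ge> 0"
  proof -
    have "\<bar>len y z0 Dd - len z0 x A\<bar> \<le> len x y e" using deg0 l0 by linarith
    then have "(len y z0 Dd - len z0 x A)\<^sup>2 \<le> (len x y e)\<^sup>2"
      by (metis abs_le_square_iff abs_of_nonneg abs_ge_zero order_trans)
    then show ?thesis by simp
  qed
  have "((len y z0 Dd + len z0 x A)\<^sup>2 - (len x y e)\<^sup>2)
           * ((len x y e)\<^sup>2 - (len y z0 Dd - len z0 x A)\<^sup>2) \<le> 0"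
    using h1 h2 by (simp add: mult_nonpos_nonneg)
  then have "- (e\<^sup>2 - 1) * (((len y z0 Dd + len z0 x A)\<^sup>2 - (len x y e)\<^sup>2)
           * ((len x y e)\<^sup>2 - (len y z0 Dd - len z0 x A)\<^sup>2)) \<ge> 0"
    using e2 by (simp add: mult_nonpos_nonpos)
  then have "4 * ((Ytri e A Dd x y z0)\<^sup>2 - (sqrt (Dlt A Dd e) * len x y e * z0)\<^sup>2) \<ge> 0"
    by (simp only: Y_heron[OF pos(1,2) z0pos pos(4,5,6)])
  then have "(Ytri e A Dd x y z0)\<^sup>2 - (sqrt (Dlt A Dd e) * len x y e * z0)\<^sup>2 \<ge> 0" by simp
  moreover have "sqrt (Dlt A Dd e) * len x y e * z0 > 0"
    using Dlt_pos[of A Dd e] pos len_pos[of x y e] z0pos by simp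
  then have "(sqrt (Dlt A Dd e) * len x y e * z0)\<^sup>2 > 0" by (rule zero_less_power)
  ultimately show False using Yz0 by simp
qed

lemma Y_big:
  fixes x y z e A Dd :: real
  assumes pos: "x > 0" "y > 0" "z > 0" "e > 1" "A > 1" "Dd > 1"
    and deg: "len x y e \<ge> len y z Dd + len z x A"
  shows "Ytri e A Dd x y z \<ge> sqrt (Dlt A Dd e) * len x y e * z"
proof -
  have e2: "e\<^sup>2 - 1 > 0" using pos by (simp add: one_less_power)
  have l0: "len y z Dd \<ge> 0" "len z x A \<ge> 0" using len_pos pos by (smt (verit))+
  have h1: "(len y z Dd + len z x A)\<^sup>2 - (len x y e)\<^sup>2 \<le> 0"
    using deg l0 by (smt (verit) power_mono)
  have h2: "(len x y e)\<^sup>2 - (len y z Dd - len z x A)\<^sup>2 \<ge> 0"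
  proof -
    have "\<bar>len y z Dd - len z x A\<bar> \<le> len x y e" using deg l0 by linarith
    then have "(len y z Dd - len z x A)\<^sup>2 \<le> (len x y e)\<^sup>2"
      by (metis abs_le_square_iff abs_of_nonneg abs_ge_zero order_trans)
    then show ?thesis by simp
  qed
  have "((len y z Dd + len z x A)\<^sup>2 - (len x y e)\<^sup>2)
           * ((len x y e)\<^sup>2 - (len y z Dd - len z x A)\<^sup>2) \<le> 0"
    using h1 h2 by (simp add: mult_nonpos_nonneg)
  then have "- (e\<^sup>2 - 1) * (((len y z Dd + len z x A)\<^sup>2 - (len x y e)\<^sup>2)
           * ((len x y e)\<^sup>2 - (len y z Dd - len z x A)\<^sup>2)) \<ge> 0"
    using e2 by (simp add: mult_nonpos_nonpos)
  then have "4 * ((Ytri e A Dd x y z)\<^sup>2 - (sqrt (Dlt A Dd e) * len x y e * z)\<^sup>2) \<ge> 0"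
    by (simp only: Y_heron[OF pos])
  then have sq: "(sqrt (Dlt A Dd e) * len x y e * z)\<^sup>2 \<le> (Ytri e A Dd x y z)\<^sup>2" by simp
  have "0 \<le> Ytri e A Dd x y z" using Y_sign[OF pos deg] .
  then show ?thesis using sq by (simp add: power2_le_iff_abs_le)
qed

lemma Y_small:
  fixes x y z e A Dd :: real
  assumes pos: "x > 0" "y > 0" "z > 0" "e > 1" "A > 1" "Dd > 1"
    and neg: "Ytri e A Dd x y z \<le> - (sqrt (Dlt A Dd e) * len x y e * z)"
  shows "len y z Dd \<ge> len x y e + len z x A \<or> len z x A \<ge> len x y e + len y z Dd"
proof -
  have e2: "e\<^sup>2 - 1 > 0" using pos by (simp add: one_less_power)
  have Ppos: "sqrt (Dlt A Dd e) * len x y e * z > 0"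
    using Dlt_pos[of A Dd e] pos len_pos[of x y e] by simp
  have l0: "len y z Dd > 0" "len z x A > 0" "len x y e > 0" using len_pos pos by (smt (verit))+
  have "\<bar>sqrt (Dlt A Dd e) * len x y e * z\<bar> \<le> \<bar>Ytri e A Dd x y z\<bar>"
    using neg Ppos by (simp add: abs_if)
  then have "(sqrt (Dlt A Dd e) * len x y e * z)\<^sup>2 \<le> (Ytri e A Dd x y z)\<^sup>2"
    using abs_le_square_iff by blast
  then have "4 * ((Ytri e A Dd x y z)\<^sup>2 - (sqrt (Dlt A Dd e) * len x y e * z)\<^sup>2) \<ge> 0" by simp
  then have "- (e\<^sup>2 - 1) * (((len y z Dd + len z x A)\<^sup>2 - (len x y e)\<^sup>2)
           * ((len x y e)\<^sup>2 - (len y z Dd - len z x A)\<^sup>2)) \<ge> 0"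
    by (simp only: Y_heron[OF pos])
  then have prod: "((len y z Dd + len z x A)\<^sup>2 - (len x y e)\<^sup>2)
           * ((len x y e)\<^sup>2 - (len y z Dd - len z x A)\<^sup>2) \<le> 0"
    using e2 by (smt (verit) mult_pos_pos mult_minus_left)
  have notdeg: "\<not> (len x y e \<ge> len y z Dd + len z x A)"
  proof
    assume "len x y e \<ge> len y z Dd + len z x A"
    then have "Ytri e A Dd x y z \<ge> 0" using Y_sign pos by blast
    then show False using neg Ppos by simp
  qed
  then have "len x y e < len y z Dd + len z x A" by simp
  then have "(len x y e)\<^sup>2 < (len y z Dd + len z x A)\<^sup>2"
    using l0 by (intro power_strict_mono) auto
  then have "(len y z Dd + len z x A)\<^sup>2 - (len x y e)\<^sup>2 > 0" by simp
  then have "(len x y e)\<^sup>2 - (len y z Dd - len z x A)\<^sup>2 \<le> 0"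
    using prod by (smt (verit) mult_pos_pos)
  then have "(len x y e)\<^sup>2 \<le> (len y z Dd - len z x A)\<^sup>2" by simp
  then have "\<bar>len x y e\<bar> \<le> \<bar>len y z Dd - len z x A\<bar>"
    using abs_le_square_iff by blast
  then have "len x y e \<le> \<bar>len y z Dd - len z x A\<bar>" using l0(3) by simp
  then show ?thesis by linarith
qed


lemma Dlt_scale:
  fixes c d x E :: real
  shows "Dlt c d x * E\<^sup>2 = (c\<^sup>2 + d\<^sup>2 - 1) * E\<^sup>2 + (E * x)\<^sup>2 + 2 * c * d * E * (E * x)"
  unfolding Dlt_def by (simp add: power2_eq_square algebra_simps)

lemma f_id_gen:
  fixes a b c d e al be :: real
  assumes al2: "al\<^sup>2 = Dlt a d e" and be2: "be\<^sup>2 = Dlt b c e" and ne: "e\<^sup>2 - 1 \<noteq> 0"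
    and P: "P = a * b + c * d + a * c * e + b * d * e"
  shows "Dlt c d ((P + al * be) / (e\<^sup>2 - 1))
     = ((al * (b + c * e) + be * (a + d * e)) / (e\<^sup>2 - 1))\<^sup>2"
proof -
  define E where "E = e\<^sup>2 - 1"
  have ne': "E \<noteq> 0" using ne unfolding E_def .
  define x where "x = (P + al * be) / E"
  have Ex: "E * x = P + al * be" unfolding x_def using ne' by simp
  have poly: "(c\<^sup>2 + d\<^sup>2 - 1) * E\<^sup>2 + P\<^sup>2 + Dlt a d e * Dlt b c e + 2 * c * d * E * P
      = Dlt a d e * (b + c * e)\<^sup>2 + Dlt b c e * (a + d * e)\<^sup>2"
    unfolding P E_def Dlt_def by (simp add: power2_eq_square algebra_simps)
  have lin: "P + c * d * E = (b + c * e) * (a + d * e)"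
    unfolding P E_def by (simp add: power2_eq_square algebra_simps)
  have "Dlt c d x * E\<^sup>2 = (c\<^sup>2 + d\<^sup>2 - 1) * E\<^sup>2 + (P + al * be)\<^sup>2 + 2 * c * d * E * (P + al * be)"
    unfolding Dlt_scale Ex ..
  also have "\<dots> = (c\<^sup>2 + d\<^sup>2 - 1) * E\<^sup>2 + P\<^sup>2 + al\<^sup>2 * be\<^sup>2 + 2 * c * d * E * P
      + 2 * (al * be) * (P + c * d * E)"
    by (simp add: power2_eq_square algebra_simps)
  also have "\<dots> = Dlt a d e * (b + c * e)\<^sup>2 + Dlt b c e * (a + d * e)\<^sup>2
      + 2 * (al * be) * ((b + c * e) * (a + d * e))"
    unfolding al2 be2 lin using poly by simp
  also have "\<dots> = (al * (b + c * e) + be * (a + d * e))\<^sup>2"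
    unfolding al2[symmetric] be2[symmetric] by (simp add: power2_eq_square algebra_simps)
  finally have "Dlt c d x * E\<^sup>2 = (al * (b + c * e) + be * (a + d * e))\<^sup>2" .
  then have "Dlt c d x = (al * (b + c * e) + be * (a + d * e))\<^sup>2 / E\<^sup>2"
    using ne' by (simp add: field_simps)
  then show ?thesis unfolding x_def E_def by (simp add: power_divide)
qed

lemma f_id1:
  fixes a b c d e al be :: real
  assumes "al\<^sup>2 = Dlt a d e" "be\<^sup>2 = Dlt b c e" "e\<^sup>2 \<noteq> 1"
  shows "Dlt c d ((a * b + c * d + a * c * e + b * d * e + al * be) / (e\<^sup>2 - 1))
     = ((al * (b + c * e) + be * (a + d * e)) / (e\<^sup>2 - 1))\<^sup>2"
  using f_id_gen[OF assms(1,2) _ refl] assms(3) by (simp add: add.assoc)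

lemma Dlt_sym: "Dlt x y z = Dlt y x z"
  unfolding Dlt_def by (simp add: algebra_simps)

lemma f_id2:
  fixes a b c d e al be :: real
  assumes "al\<^sup>2 = Dlt a d e" "be\<^sup>2 = Dlt b c e" "e\<^sup>2 \<noteq> 1"
  shows "Dlt a b ((a * b + c * d + a * c * e + b * d * e + al * be) / (e\<^sup>2 - 1))
     = ((al * (c + b * e) + be * (d + a * e)) / (e\<^sup>2 - 1))\<^sup>2"
proof -
  have b2: "be\<^sup>2 = Dlt c b e" using assms(2) Dlt_sym by simp
  have a2: "al\<^sup>2 = Dlt d a e" using assms(1) Dlt_sym by simp
  have "Dlt a b ((c * d + a * b + c * a * e + d * b * e + be * al) / (e\<^sup>2 - 1))
     = ((be * (d + a * e) + al * (c + b * e)) / (e\<^sup>2 - 1))\<^sup>2"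
    using f_id_gen[OF b2 a2 _ refl] assms(3) by (simp add: add.assoc)
  then show ?thesis by (simp add: algebra_simps)
qed

lemma hinge:
  fixes p q r s a b c d e :: real
  assumes pos: "p > 0" "q > 0" "r > 0" "s > 0"
    and I1: "a > 1" "b > 1" "c > 1" "d > 1" "e > 1"
    and wd: "local_wDelaunay p q r s a b c d e"
    and deg: "len q s e \<ge> len s p d + len p q a"
  shows "len q r b \<ge> len r s c + len q s e \<or> len r s c \<ge> len q s e + len q r b"
proof -
  define al where "al = sqrt (Dlt a d e)"
  define be where "be = sqrt (Dlt b c e)"
  define E where "E = e\<^sup>2 - 1"
  have Epos: "E > 0" unfolding E_def using I1 by (simp add: one_less_power)
  have alpos: "al > 0" unfolding al_def using Dlt_pos I1 by simp
  have bepos: "be > 0" unfolding be_def using Dlt_pos I1 by simp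
  have al2: "al\<^sup>2 = Dlt a d e" unfolding al_def using Dlt_pos[of a d e] I1 by simp
  have be2: "be\<^sup>2 = Dlt b c e" unfolding be_def using Dlt_pos[of b c e] I1 by simp
  have e1: "e\<^sup>2 \<noteq> 1" using Epos unfolding E_def by simp
  define S1 where "S1 = (al * (b + c * e) + be * (a + d * e)) / E"
  define S2 where "S2 = (al * (c + b * e) + be * (d + a * e)) / E"
  have S1pos: "S1 \<ge> 0" unfolding S1_def using alpos bepos I1 Epos by simp
  have S2pos: "S2 \<ge> 0" unfolding S2_def using alpos bepos I1 Epos by simp
  have "sqrt (Dlt c d (fpar a b c d e)) = sqrt ((S1)\<^sup>2)"
    unfolding fpar_def al_def[symmetric] be_def[symmetric] f_id1[OF al2 be2 e1]
    unfolding S1_def E_def by simp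
  also have "\<dots> = S1" using S1pos by simp
  finally have f1: "sqrt (Dlt c d (fpar a b c d e)) = S1" .
  have "sqrt (Dlt a b (fpar a b c d e)) = sqrt ((S2)\<^sup>2)"
    unfolding fpar_def al_def[symmetric] be_def[symmetric] f_id2[OF al2 be2 e1]
    unfolding S2_def E_def by simp
  also have "\<dots> = S2" using S2pos by simp
  finally have f2: "sqrt (Dlt a b (fpar a b c d e)) = S2" .
  have W: "be / p + al / r \<le> S1 / q + S2 / s"
    using wd unfolding local_wDelaunay_def Let_def f1 f2 al_def be_def by simp
  have key: "(S1 / q + S2 / s - be / p - al / r) * (p * q * r * s * E)
      = - (be * r * Ytri e a d q s p + al * p * Ytri e b c q s r)"
  proof -
    have k1: "S1 * E = al * (b + c * e) + be * (a + d * e)" unfolding S1_def using Epos by simp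
    have k2: "S2 * E = al * (c + b * e) + be * (d + a * e)" unfolding S2_def using Epos by simp
    have "(S1 / q + S2 / s - be / p - al / r) * (p * q * r * s * E)
       = (S1 * E) * (p * r * s) + (S2 * E) * (p * q * r) - be * E * (q * r * s) - al * E * (p * q * s)"
      using pos by (simp add: field_simps)
    also have "\<dots> = - (be * r * Ytri e a d q s p + al * p * Ytri e b c q s r)"
      unfolding k1 k2 unfolding Ytri_def E_def by (simp add: algebra_simps)
    finally show ?thesis .
  qed
  have "(S1 / q + S2 / s - be / p - al / r) * (p * q * r * s * E) \<ge> 0"
    using W pos Epos by simp
  then have D0: "be * r * Ytri e a d q s p + al * p * Ytri e b c q s r \<le> 0"
    unfolding key by simp
  have Yk: "Ytri e a d q s p \<ge> al * len q s e * p"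
    unfolding al_def using Y_big[of q s p e a d] pos I1 deg by simp
  have "be * r * (al * len q s e * p) \<le> be * r * Ytri e a d q s p"
    using Yk bepos pos by (intro mult_left_mono) auto
  then have "al * p * Ytri e b c q s r \<le> - (be * r * (al * len q s e * p))"
    using D0 by linarith
  then have "al * p * (Ytri e b c q s r + be * len q s e * r) \<le> 0"
    by (simp add: algebra_simps)
  then have "al * p * (Ytri e b c q s r + be * len q s e * r) \<le> al * p * 0" by simp
  moreover have "al * p > 0" using alpos pos by simp
  ultimately have "Ytri e b c q s r + be * len q s e * r \<le> 0"
    using mult_le_cancel_left_pos by blast
  then have "Ytri e b c q s r \<le> - (sqrt (Dlt b c e) * len q s e * r)"
    unfolding be_def by linarith
  then have "len s r c \<ge> len q s e + len r q b \<or> len r q b \<ge> len q s e + len s r c"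
    using Y_small[OF pos(2,4,3) I1(5,2,3)] by blast
  moreover have "len s r c = len r s c" "len r q b = len q r b" by (rule len_sym)+
  ultimately show ?thesis by linarith
qed


lemma Lf_len: "Lf nxt opp tail I r d = len (r (tail d)) (r (tail (nxt d))) (I (edge_of opp d))"
  unfolding Lf_def len_def by simp

theorem theorem4p4:
  fixes D :: "'d set" and nxt opp :: "'d \<Rightarrow> 'd" and tail :: "'d \<Rightarrow> 'v" and V :: "'v set"
  assumes "triangulation D nxt opp tail V"
  shows "Df D nxt opp tail V \<subseteq> Qf D nxt opp tail V"
proof
  fix z assume "z \<in> Df D nxt opp tail V"
  then obtain I r where z: "z = (I, r)" and par: "(I, r) \<in> params D opp V"
    and dl: "\<forall>d\<in>D. delaunay_at nxt opp tail I r d"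
    unfolding Df_def by auto
  have T: "finite D" "\<forall>d\<in>D. nxt d \<in> D \<and> nxt d \<noteq> d \<and> nxt (nxt (nxt d)) = d"
    "\<forall>d\<in>D. opp d \<in> D \<and> opp d \<noteq> d \<and> opp (opp d) = d"
    "\<forall>d\<in>D. tail (opp d) = tail (nxt d)" "V = tail ` D"
    using assms unfolding triangulation_def by auto
  have Ipos: "\<And>d. d \<in> D \<Longrightarrow> I (edge_of opp d) > 1"
    using par unfolding params_def tri_edges_def by auto
  have rpos: "\<And>d. d \<in> D \<Longrightarrow> r (tail d) > 0"
    using par T(5) unfolding params_def by auto
  define L where "L = Lf nxt opp tail I r"
  have Lpos: "\<And>d. d \<in> D \<Longrightarrow> L d > 0"
  proof -
    fix d assume "d \<in> D"
    then have "I (edge_of opp d) > 1" "r (tail d) > 0" "r (tail (nxt d)) > 0"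
      using Ipos rpos T(2) by auto
    then show "L d > 0" unfolding L_def Lf_len
      by (intro len_pos) auto
  qed
  have "\<forall>d\<in>D. L d < L (nxt d) + L (nxt (nxt d))"
  proof (rule ccontr)
    assume nt: "\<not> (\<forall>d\<in>D. L d < L (nxt d) + L (nxt (nxt d)))"
    define B where "B = {d \<in> D. \<not> L d < L (nxt d) + L (nxt (nxt d))}"
    have Bne: "B \<noteq> {}" using nt unfolding B_def by auto
    have Bfin: "finite B" unfolding B_def using T(1) by simp
    define M where "M = Max (L ` B)"
    have "M \<in> L ` B" unfolding M_def using Bne Bfin by simp
    then obtain m where mB: "m \<in> B" and mM: "L m = M" by auto
    have maxm: "\<And>d. d \<in> B \<Longrightarrow> L d \<le> L m"
      unfolding mM M_def using Bfin by simp
    have mD: "m \<in> D" using mB unfolding B_def by simp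
    have degm: "L m \<ge> L (nxt m) + L (nxt (nxt m))" using mB unfolding B_def by simp
    define o1 where "o1 = opp m"
    have o1D: "o1 \<in> D" unfolding o1_def using T(3) mD by auto
    have n1: "nxt m \<in> D" using T(2) mD by auto
    have n2: "nxt (nxt m) \<in> D" using T(2) n1 by auto
    have y1D: "nxt o1 \<in> D" using T(2) o1D by auto
    have y2D: "nxt (nxt o1) \<in> D" using T(2) y1D by auto
    have nnn_m: "nxt (nxt (nxt m)) = m" using T(2) mD by auto
    have nnn_o: "nxt (nxt (nxt o1)) = o1" using T(2) o1D by auto
    have oo: "opp o1 = m" unfolding o1_def using T(3) mD by auto
    have tail_o1: "tail o1 = tail (nxt m)" unfolding o1_def using T(4) mD by auto
    have tail_y1: "tail (nxt o1) = tail m" using T(4) o1D oo by metis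
    have oom: "opp (opp m) = m" using T(3) mD by auto
    have E_o1: "edge_of opp o1 = edge_of opp m" unfolding edge_of_def o1_def using oom by auto
    define i where "i = tail m"
    define j where "j = tail (nxt m)"
    define k where "k = tail (nxt (nxt m))"
    define l where "l = tail (nxt (nxt o1))"
    define a where "a = I (edge_of opp (nxt (nxt m)))"
    define b where "b = I (edge_of opp (nxt o1))"
    define c where "c = I (edge_of opp (nxt (nxt o1)))"
    define d where "d = I (edge_of opp (nxt m))"
    define e where "e = I (edge_of opp m)"
    have Lm: "L m = len (r i) (r j) e" unfolding L_def Lf_len i_def j_def e_def ..
    have Ln1: "L (nxt m) = len (r j) (r k) d" unfolding L_def Lf_len j_def k_def d_def ..
    have Ln2: "L (nxt (nxt m)) = len (r k) (r i) a" unfolding L_def Lf_len k_def i_def a_def nnn_m ..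
    have "L o1 = len (r (tail o1)) (r (tail (nxt o1))) (I (edge_of opp o1))"
      unfolding L_def by (rule Lf_len)
    also have "\<dots> = len (r j) (r i) e" unfolding tail_o1 tail_y1 E_o1 j_def i_def e_def ..
    finally have Lo: "L o1 = len (r j) (r i) e" .
    have Ly1: "L (nxt o1) = len (r i) (r l) b" unfolding L_def Lf_len i_def l_def b_def tail_y1 ..
    have Ly2: "L (nxt (nxt o1)) = len (r l) (r j) c" unfolding L_def Lf_len l_def j_def c_def nnn_o tail_o1 ..
    have "delaunay_at nxt opp tail I r m" using dl mD by blast
    then have wd: "local_wDelaunay (r k) (r i) (r l) (r j) a b c d e"
      unfolding delaunay_at_def Let_def i_def j_def k_def l_def a_def b_def c_def d_def e_def o1_def .
    have pos: "r k > 0" "r i > 0" "r l > 0" "r j > 0"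
      unfolding i_def j_def k_def l_def using rpos mD n1 n2 y2D by auto
    have I1: "a > 1" "b > 1" "c > 1" "d > 1" "e > 1"
      unfolding a_def b_def c_def d_def e_def using Ipos mD n1 n2 y1D y2D by auto
    have deg: "len (r i) (r j) e \<ge> len (r j) (r k) d + len (r k) (r i) a"
      using degm Lm Ln1 Ln2 by simp
    have "len (r i) (r l) b \<ge> len (r l) (r j) c + len (r i) (r j) e
        \<or> len (r l) (r j) c \<ge> len (r i) (r j) e + len (r i) (r l) b"
      using hinge[OF pos I1 wd deg] .
    then show False
    proof
      assume h: "len (r i) (r l) b \<ge> len (r l) (r j) c + len (r i) (r j) e"
      have "L (nxt o1) \<ge> L (nxt (nxt o1)) + L o1"
        using h unfolding Ly1 Ly2 Lo len_sym[of "r j" "r i"] by simp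
      then have "nxt o1 \<in> B" unfolding B_def using y1D nnn_o by simp
      then have "L (nxt o1) \<le> L m" by (rule maxm)
      moreover have "L (nxt (nxt o1)) > 0" using Lpos y2D by simp
      ultimately show False using h Ly1 Ly2 Lm by simp
    next
      assume h: "len (r l) (r j) c \<ge> len (r i) (r j) e + len (r i) (r l) b"
      have "L (nxt (nxt o1)) \<ge> L o1 + L (nxt o1)"
        using h unfolding Ly1 Ly2 Lo len_sym[of "r j" "r i"] by simp
      then have "nxt (nxt o1) \<in> B" unfolding B_def using y2D nnn_o by simp
      then have "L (nxt (nxt o1)) \<le> L m" by (rule maxm)
      moreover have "L (nxt o1) > 0" using Lpos y1D by simp
      ultimately show False using h Ly1 Ly2 Lm by simp
    qed
  qed
  then show "z \<in> Qf D nxt opp tail V"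
    unfolding z Qf_def L_def using par by simp
qed

end
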